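(* Let $\mathfrak{g}$ be a finite-dimensional real Lie algebra and let $h\colon \mathfrak{g}^{*} \to \mathbb{R}$ be smooth. Fix a choice of sign $\pm$ and define $\mathbf{M}_{\pm}\colon T^{*}\mathfrak{g} = \mathfrak{g}\times\mathfrak{g}^{*} \to \mathfrak{g}^{*}$ by $\mathbf{M}_{\pm}(q,p) = \mp\operatorname{ad}_{q}^{*}p$, and $H\colon T^{*}\mathfrak{g} \to \mathbb{R}$ by $H(q,p) = h(\mathbf{M}_{\pm}(q,p)) = h(\mp\operatorname{ad}_{q}^{*}p)$. Let $t \mapsto (q(t),p(t))$ be a solution of the canonical Hamiltonian system $\dot{q} = \partial H/\partial p$, $\dot{p} = -\partial H/\partial q$ on $T^{*}\mathfrak{g} \cong T^{*}\mathbb{R}^{n}$. Then $t \mapsto \mu(t) := \mathbf{M}_{\pm}(q(t),p(t))$ is a solution of the Lie--Poisson equation $$\dot{\mu} = \mp\operatorname{ad}_{Dh(\mu)}^{*}\mu .$$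
   Context: $n = \dim\mathfrak{g}$; $\langle\cdot,\cdot\rangle$ is the natural pairing $\mathfrak{g}^{*}\times\mathfrak{g}\to\mathbb{R}$. For $x \in \mathfrak{g}$, $\operatorname{ad}_{x}y = [x,y]$ and $\operatorname{ad}_{x}^{*}\colon\mathfrak{g}^{*}\to\mathfrak{g}^{*}$ is its dual, $\langle \operatorname{ad}_{x}^{*}\alpha, y\rangle = \langle \alpha, [x,y]\rangle$. $T^{*}\mathfrak{g}$ is identified with $\mathfrak{g}\times\mathfrak{g}^{*}$ and carries the canonical symplectic structure; in a basis $\{E_i\}$ of $\mathfrak{g}$ with dual basis, $q = q^{i}E_i$, $p = p_i E^{i}_{*}$ and Hamilton's equations are $\dot q^{i} = \partial H/\partial p_i$, $\dot p_i = -\partial H/\partial q^{i}$. For smooth $f\colon\mathfrak{g}^{*}\to\mathbb{R}$, $Df(\mu)\in\mathfrak{g}$ is defined by $\langle \delta\mu, Df(\mu)\rangle = \frac{d}{ds}\big|_{s=0} f(\mu+s\delta\mu)$ for all $\delta\mu\in\mathfrak{g}^{*}$. The equation $\dot\mu = \mp\operatorname{ad}^{*}_{Dh(\mu)}\mu$ is the Hamiltonian equation of $h$ with respect to the $(\pm)$-Lie--Poisson bracket $\{f,g\}_{\pm}(\mu) = \pm\langle \mu, [Df(\mu), Dg(\mu)]\rangle$. *)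

theory Defs
  imports "HOL-Analysis.Analysis"
begin

text \<open>A finite-dimensional real Lie algebra, realised on the coordinate space
  real^'n (a basis E_i fixed); the dual space g* is identified with real^'n via the
  dual basis, so that the natural pairing is the dot product.\<close>

definition lie_bracket :: "(real^'n \<Rightarrow> real^'n \<Rightarrow> real^'n) \<Rightarrow> bool" where
  "lie_bracket br \<longleftrightarrow>
     bilinear br \<and>
     (\<forall>x. br x x = 0) \<and>
     (\<forall>x y z. br x (br y z) + br y (br z x) + br z (br x y) = 0)"

definition pair :: "real^'n \<Rightarrow> real^'n \<Rightarrow> real" where
  "pair \<alpha> y = \<alpha> \<bullet> y"

definition ad_star :: "(real^'n \<Rightarrow> real^'n \<Rightarrow> real^'n) \<Rightarrow> real^'n \<Rightarrow> real^'n \<Rightarrow> real^'n" where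
  "ad_star br x \<alpha> = (THE \<beta>. \<forall>y. pair \<beta> y = pair \<alpha> (br x y))"

definition Dfun :: "(real^'n \<Rightarrow> real) \<Rightarrow> real^'n \<Rightarrow> real^'n" where
  "Dfun f \<mu> = (THE x. \<forall>\<delta>. ((\<lambda>s. f (\<mu> + s *\<^sub>R \<delta>)) has_real_derivative pair \<delta> x) (at 0))"

fun Ck :: "nat \<Rightarrow> (real^'n \<Rightarrow> real) \<Rightarrow> bool" where
  "Ck 0 f = continuous_on UNIV f"
| "Ck (Suc k) f = (f differentiable_on UNIV \<and> continuous_on UNIV f \<and>
       (\<forall>v. Ck k (\<lambda>x. frechet_derivative f (at x) v)))"

definition smooth :: "(real^'n \<Rightarrow> real) \<Rightarrow> bool" where
  "smooth f \<longleftrightarrow> (\<forall>k. Ck k f)"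

definition dH_dq :: "(real^'n \<Rightarrow> real^'n \<Rightarrow> real) \<Rightarrow> real^'n \<Rightarrow> real^'n \<Rightarrow> 'n \<Rightarrow> real" where
  "dH_dq H q p i = deriv (\<lambda>s. H (q + s *\<^sub>R axis i 1) p) 0"

definition dH_dp :: "(real^'n \<Rightarrow> real^'n \<Rightarrow> real) \<Rightarrow> real^'n \<Rightarrow> real^'n \<Rightarrow> 'n \<Rightarrow> real" where
  "dH_dp H q p i = deriv (\<lambda>s. H q (p + s *\<^sub>R axis i 1)) 0"

definition hamiltonian_solution ::
  "(real^'n \<Rightarrow> real^'n \<Rightarrow> real) \<Rightarrow> real set \<Rightarrow> (real \<Rightarrow> real^'n) \<Rightarrow> (real \<Rightarrow> real^'n) \<Rightarrow> bool" where
  "hamiltonian_solution H T q p \<longleftrightarrow>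
     (\<forall>t\<in>T. (q has_vector_derivative (\<chi> i. dH_dp H (q t) (p t) i)) (at t) \<and>
            (p has_vector_derivative (\<chi> i. - dH_dq H (q t) (p t) i)) (at t))"

end

theory Submission
  imports Defs
begin

lemma ad_star_inner:
  assumes "bilinear br"
  shows "ad_star br x \<alpha> \<bullet> y = \<alpha> \<bullet> br x y"
proof -
  have lin: "linear (br x)" using assms unfolding bilinear_def by blast
  have ex: "\<forall>y. pair (adjoint (br x) \<alpha>) y = pair \<alpha> (br x y)"
    using adjoint_works[OF lin] by (simp add: pair_def inner_commute)
  have "ad_star br x \<alpha> = adjoint (br x) \<alpha>"
    unfolding ad_star_def
  proof (rule the_equality)
    show "\<forall>y. pair (adjoint (br x) \<alpha>) y = pair \<alpha> (br x y)" by (rule ex)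
  next
    fix \<beta> assume "\<forall>y. pair \<beta> y = pair \<alpha> (br x y)"
    then have "\<forall>y. \<beta> \<bullet> y = adjoint (br x) \<alpha> \<bullet> y" using ex by (simp add: pair_def)
    then show "\<beta> = adjoint (br x) \<alpha>" using vector_eq_rdot by blast
  qed
  then show ?thesis using ex by (simp add: pair_def)
qed

lemma ad_star_bilinear:
  assumes "bilinear br"
  shows "bilinear (ad_star br)"
proof -
  note adi = ad_star_inner[OF assms]
  have l1: "ad_star br x (a + b) = ad_star br x a + ad_star br x b"
    "ad_star br x (c *\<^sub>R a) = c *\<^sub>R ad_star br x a"
    "ad_star br (a + b) x = ad_star br a x + ad_star br b x"
    "ad_star br (c *\<^sub>R a) x = c *\<^sub>R ad_star br a x" for x a b c
  proof -
    show "ad_star br x (a + b) = ad_star br x a + ad_star br x b"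
      by (rule vector_eq_rdot[THEN iffD1], simp add: adi inner_add_left)
    show "ad_star br x (c *\<^sub>R a) = c *\<^sub>R ad_star br x a"
      by (rule vector_eq_rdot[THEN iffD1], simp add: adi)
    show "ad_star br (a + b) x = ad_star br a x + ad_star br b x"
      by (rule vector_eq_rdot[THEN iffD1], simp add: adi inner_add_left inner_add_right bilinear_ladd[OF assms])
    show "ad_star br (c *\<^sub>R a) x = c *\<^sub>R ad_star br a x"
      by (rule vector_eq_rdot[THEN iffD1], simp add: adi bilinear_lmul[OF assms])
  qed
  show ?thesis unfolding bilinear_def
    by (auto intro!: linearI simp: l1)
qed

theorem theorem3p1:
  fixes br :: "real^'n \<Rightarrow> real^'n \<Rightarrow> real^'n"
    and h :: "real^'n \<Rightarrow> real"
    and \<sigma> :: real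
    and T :: "real set"
    and q p :: "real \<Rightarrow> real^'n"
  assumes "lie_bracket br"
    and "smooth h"
    and "\<sigma> = 1 \<or> \<sigma> = -1"
    and "open T"
    and "hamiltonian_solution (\<lambda>q p. h (- \<sigma> *\<^sub>R ad_star br q p)) T q p"
  shows "\<forall>t\<in>T. ((\<lambda>t. - \<sigma> *\<^sub>R ad_star br (q t) (p t)) has_vector_derivative
            (- \<sigma> *\<^sub>R ad_star br (Dfun h (- \<sigma> *\<^sub>R ad_star br (q t) (p t)))
                               (- \<sigma> *\<^sub>R ad_star br (q t) (p t)))) (at t)"
proof
  fix t assume tT: "t \<in> T"
  have bl: "bilinear br" and alt: "\<And>x. br x x = 0"
    and jac: "\<And>x y z. br x (br y z) + br y (br z x) + br z (br x y) = 0"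
    using assms(1) unfolding lie_bracket_def by auto
  have ss: "\<sigma> * \<sigma> = 1" using assms(3) by auto
  have anti: "br y x = - br x y" for x y
  proof -
    have "br (x + y) (x + y) = 0" by (rule alt)
    then have "br x x + br x y + br y x + br y y = 0"
      by (simp add: bilinear_ladd[OF bl] bilinear_radd[OF bl] algebra_simps)
    then show ?thesis by (simp add: alt eq_neg_iff_add_eq_0 add.commute)
  qed
  have bla: "bilinear (ad_star br)" by (rule ad_star_bilinear[OF bl])
  note adi = ad_star_inner[OF bl]
  have hdiff: "h differentiable (at x)" for x
  proof -
    have "Ck (Suc 0) h" using assms(2) unfolding smooth_def by blast
    then have "h differentiable_on UNIV" by simp
    then show ?thesis by (simp add: differentiable_on_eq_differentiable_at)
  qed
  define g where "g x = adjoint (frechet_derivative h (at x)) 1" for x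
  have hder: "(h has_derivative frechet_derivative h (at x)) (at x)" for x
    using hdiff frechet_derivative_works by blast
  have fd: "frechet_derivative h (at x) v = v \<bullet> g x" for x v
  proof -
    have "linear (frechet_derivative h (at x))" using hder has_derivative_linear by blast
    from adjoint_works[OF this, of v 1] show ?thesis by (simp add: g_def)
  qed
  have hD: "((\<lambda>s. h (m + s *\<^sub>R v)) has_real_derivative (v \<bullet> g m)) (at 0)" for m v
  proof -
    have d1: "((\<lambda>s::real. m + s *\<^sub>R v) has_derivative (\<lambda>s. s *\<^sub>R v)) (at 0)"
      by (auto intro!: derivative_eq_intros)
    have "((\<lambda>s. h (m + s *\<^sub>R v)) has_derivative
        (\<lambda>s. frechet_derivative h (at m) (s *\<^sub>R v))) (at 0)"
      using has_derivative_compose[OF d1, of h] hder[of m] by simp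
    moreover have "frechet_derivative h (at m) (s *\<^sub>R v) = s * (v \<bullet> g m)" for s
      by (simp add: fd)
    ultimately have X: "((\<lambda>s. h (m + s *\<^sub>R v)) has_derivative (\<lambda>s. s * (v \<bullet> g m))) (at 0)"
      by simp
    moreover have "(\<lambda>s. s * (v \<bullet> g m)) = (*) (v \<bullet> g m)" by (auto simp: fun_eq_iff)
    ultimately show ?thesis unfolding has_field_derivative_def by simp
  qed
  have Dg: "Dfun h m = g m" for m
    unfolding Dfun_def
  proof (rule the_equality)
    show "\<forall>\<delta>. ((\<lambda>s. h (m + s *\<^sub>R \<delta>)) has_real_derivative pair \<delta> (g m)) (at 0)"
      using hD by (simp add: pair_def)
  next
    fix x assume A: "\<forall>\<delta>. ((\<lambda>s. h (m + s *\<^sub>R \<delta>)) has_real_derivative pair \<delta> x) (at 0)"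
    have "\<delta> \<bullet> x = \<delta> \<bullet> g m" for \<delta>
      using DERIV_unique[OF A[rule_format, of \<delta>] hD[of m \<delta>]] by (simp add: pair_def)
    then show "x = g m" using vector_eq_ldot by blast
  qed
  define Q where "Q = q t"
  define P where "P = p t"
  define \<mu> where "\<mu> = - \<sigma> *\<^sub>R ad_star br Q P"
  define \<xi> where "\<xi> = g \<mu>"
  have sol: "(q has_vector_derivative (\<chi> i. dH_dp (\<lambda>q p. h (- \<sigma> *\<^sub>R ad_star br q p)) Q P i)) (at t)"
     "(p has_vector_derivative (\<chi> i. - dH_dq (\<lambda>q p. h (- \<sigma> *\<^sub>R ad_star br q p)) Q P i)) (at t)"
    using assms(5) tT unfolding hamiltonian_solution_def Q_def P_def by auto
  have dp: "(\<chi> i. dH_dp (\<lambda>q p. h (- \<sigma> *\<^sub>R ad_star br q p)) Q P i) = - \<sigma> *\<^sub>R br Q \<xi>"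
  proof -
    have "dH_dp (\<lambda>q p. h (- \<sigma> *\<^sub>R ad_star br q p)) Q P i = (- \<sigma> *\<^sub>R br Q \<xi>) $ i" for i
    proof -
      have e: "(\<lambda>s. h (- \<sigma> *\<^sub>R ad_star br Q (P + s *\<^sub>R axis i 1)))
          = (\<lambda>s. h (\<mu> + s *\<^sub>R (- \<sigma> *\<^sub>R ad_star br Q (axis i 1))))"
        by (simp add: \<mu>_def bilinear_radd[OF bla] bilinear_rmul[OF bla] algebra_simps)
      have "dH_dp (\<lambda>q p. h (- \<sigma> *\<^sub>R ad_star br q p)) Q P i
          = (- \<sigma> *\<^sub>R ad_star br Q (axis i 1)) \<bullet> \<xi>"
        unfolding dH_dp_def e \<xi>_def by (rule DERIV_imp_deriv[OF hD])
      also have "\<dots> = (- \<sigma> *\<^sub>R br Q \<xi>) $ i"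
        by (simp add: adi inner_axis')
      finally show ?thesis .
    qed
    then show ?thesis by (simp add: vec_eq_iff)
  qed
  have dq: "(\<chi> i. - dH_dq (\<lambda>q p. h (- \<sigma> *\<^sub>R ad_star br q p)) Q P i) = - \<sigma> *\<^sub>R ad_star br \<xi> P"
  proof -
    have "- dH_dq (\<lambda>q p. h (- \<sigma> *\<^sub>R ad_star br q p)) Q P i = (- \<sigma> *\<^sub>R ad_star br \<xi> P) $ i" for i
    proof -
      have e: "(\<lambda>s. h (- \<sigma> *\<^sub>R ad_star br (Q + s *\<^sub>R axis i 1) P))
          = (\<lambda>s. h (\<mu> + s *\<^sub>R (- \<sigma> *\<^sub>R ad_star br (axis i 1) P)))"
        by (simp add: \<mu>_def bilinear_ladd[OF bla] bilinear_lmul[OF bla] algebra_simps)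
      have "dH_dq (\<lambda>q p. h (- \<sigma> *\<^sub>R ad_star br q p)) Q P i
          = (- \<sigma> *\<^sub>R ad_star br (axis i 1) P) \<bullet> \<xi>"
        unfolding dH_dq_def e \<xi>_def by (rule DERIV_imp_deriv[OF hD])
      also have "\<dots> = - (- \<sigma> *\<^sub>R ad_star br \<xi> P) $ i"
      proof -
        have c: "ad_star br \<xi> P $ i = P \<bullet> br \<xi> (axis i 1)"
          using adi[of \<xi> P "axis i 1"] by (simp add: inner_axis)
        show ?thesis by (simp add: adi c anti[of "axis i 1" \<xi>])
      qed
      finally show ?thesis by simp
    qed
    then show ?thesis by (simp add: vec_eq_iff)
  qed
  have bb: "bounded_bilinear (ad_star br)" using bla bilinear_conv_bounded_bilinear by blast
  have "((\<lambda>t. ad_star br (q t) (p t)) has_vector_derivative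
      (ad_star br Q (- \<sigma> *\<^sub>R ad_star br \<xi> P) + ad_star br (- \<sigma> *\<^sub>R br Q \<xi>) P)) (at t)"
    using bounded_bilinear.has_vector_derivative[OF bb sol(1)[unfolded dp] sol(2)[unfolded dq]]
    by (simp add: Q_def P_def)
  then have D: "((\<lambda>t. - \<sigma> *\<^sub>R ad_star br (q t) (p t)) has_vector_derivative
      - \<sigma> *\<^sub>R (ad_star br Q (- \<sigma> *\<^sub>R ad_star br \<xi> P) + ad_star br (- \<sigma> *\<^sub>R br Q \<xi>) P)) (at t)"
    by (rule bounded_linear.has_vector_derivative[OF bounded_linear_scaleR_right])
  have eq: "- \<sigma> *\<^sub>R (ad_star br Q (- \<sigma> *\<^sub>R ad_star br \<xi> P) + ad_star br (- \<sigma> *\<^sub>R br Q \<xi>) P)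
      = - \<sigma> *\<^sub>R ad_star br \<xi> \<mu>"
  proof (rule vector_eq_rdot[THEN iffD1], rule allI)
    fix y
    have j: "br Q (br \<xi> y) = br \<xi> (br Q y) + br (br Q \<xi>) y"
    proof -
      have a1: "br \<xi> (br y Q) = - br \<xi> (br Q y)"
        using anti[of Q y] bilinear_rneg[OF bl] by simp
      have a2: "br y (br Q \<xi>) = - br (br Q \<xi>) y" by (rule anti)
      have "br Q (br \<xi> y) + - br \<xi> (br Q y) + - br (br Q \<xi>) y = 0"
        using jac[of Q \<xi> y] unfolding a1 a2 .
      then have "br Q (br \<xi> y) - (br \<xi> (br Q y) + br (br Q \<xi>) y) = 0"
        by (simp add: algebra_simps)
      then show ?thesis by simp
    qed
    have "(- \<sigma> *\<^sub>R (ad_star br Q (- \<sigma> *\<^sub>R ad_star br \<xi> P) + ad_star br (- \<sigma> *\<^sub>R br Q \<xi>) P)) \<bullet> y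
        = (\<sigma> * \<sigma>) * (P \<bullet> br \<xi> (br Q y) + P \<bullet> br (br Q \<xi>) y)"
      by (simp add: adi inner_add_left bilinear_lneg[OF bl] bilinear_lmul[OF bl] algebra_simps)
    also have "\<dots> = (\<sigma> * \<sigma>) * (P \<bullet> br Q (br \<xi> y))"
      by (simp add: j inner_add_right)
    also have "\<dots> = (- \<sigma> *\<^sub>R ad_star br \<xi> \<mu>) \<bullet> y"
      by (simp add: adi \<mu>_def)
    finally show "(- \<sigma> *\<^sub>R (ad_star br Q (- \<sigma> *\<^sub>R ad_star br \<xi> P) + ad_star br (- \<sigma> *\<^sub>R br Q \<xi>) P)) \<bullet> y
        = (- \<sigma> *\<^sub>R ad_star br \<xi> \<mu>) \<bullet> y" .
  qed
  show "((\<lambda>t. - \<sigma> *\<^sub>R ad_star br (q t) (p t)) has_vector_derivative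
            (- \<sigma> *\<^sub>R ad_star br (Dfun h (- \<sigma> *\<^sub>R ad_star br (q t) (p t)))
                               (- \<sigma> *\<^sub>R ad_star br (q t) (p t)))) (at t)"
  proof -
    have "((\<lambda>t. - \<sigma> *\<^sub>R ad_star br (q t) (p t)) has_vector_derivative
      (- \<sigma> *\<^sub>R ad_star br \<xi> \<mu>)) (at t)" using D unfolding eq .
    then show ?thesis unfolding Dg \<xi>_def \<mu>_def Q_def P_def .
  qed
qed

end
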